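(* Let $\alpha,\beta>0$, $f$ as in the context, and $\zeta,\xi:\mathbb{R}_+\to\mathbb{R}$ continuous. Let $(\underline{\mathbf{W}},\underline{\mathbf{Q}})$ and $(\overline{\mathbf{W}},\overline{\mathbf{Q}})$, with all components in $\mathscr{C}^1([0,+\infty),\mathbb{R})$, be respectively a subsolution and a supersolution of the asymptotic system for $t>0$ and integers $j\in[\zeta(t),\xi(t)]$, i.e. for such $t,j$: $$\overline{W}_j'\ge-2\alpha\overline{W}_j+\beta(\overline{Q}_j+\overline{Q}_{j+1}),\quad \overline{Q}_j'\ge f(\overline{Q}_j)+\alpha(\overline{W}_j+\overline{W}_{j-1})-2\beta\overline{Q}_j,$$ and the same with all inequalities reversed for $(\underline{\mathbf{W}},\underline{\mathbf{Q}})$. Assume $\underline{W}_j(0)\le\overline{W}_j(0)$ and $\underline{Q}_j(0)\le\overline{Q}_j(0)$ for all integers $\zeta(0)-1\le j\le\xi(0)+1$, and $\underline{W}_j(t)\le\overline{W}_j(t)$, $\underline{Q}_j(t)\le\overline{Q}_j(t)$ for all $t>0$ and integers $j\in[\zeta(t)-1,\zeta(t))\cup(\xi(t),\xi(t)+1]$. Then $\underline{W}_j(t)\le\overline{W}_j(t)$ and $\underline{Q}_j(t)\le\overline{Q}_j(t)$ for all $t>0$ and integers $\zeta(t)\le j\le\xi(t)$.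
   Context: $f\in\mathscr{C}^1([0,1])$ satisfies $f(0)=f(1)=0$ and $0<f(u)\le f'(0)u$ for $u\in(0,1)$, extended to a locally Lipschitz function on $\mathbb{R}$ negative on $\mathbb{R}\setminus[0,1]$. *)

theory Defs
  imports "HOL-Analysis.Analysis"
begin

definition admissible_f :: "(real \<Rightarrow> real) \<Rightarrow> bool" where
  "admissible_f f \<longleftrightarrow>
     (\<exists>f'. (\<forall>x\<in>{0..1}. (f has_real_derivative f' x) (at x within {0..1}))
          \<and> continuous_on {0..1} f'
          \<and> f 0 = 0 \<and> f 1 = 0
          \<and> (\<forall>u\<in>{0<..<1}. 0 < f u \<and> f u \<le> f' 0 * u))
   \<and> (\<forall>x. \<exists>U L. open U \<and> x \<in> U \<and> L-lipschitz_on U f)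
   \<and> (\<forall>u. u \<notin> {0..1} \<longrightarrow> f u < 0)"

end

theory Submission
  imports Defs
begin


lemma bnd_on:
  fixes g :: "real \<Rightarrow> real"
  assumes "continuous_on {0..} g"
  shows "\<exists>B. \<forall>t\<in>{0..T}. \<bar>g t\<bar> \<le> B"
proof -
  have "compact (g ` {0..T})"
    by (rule compact_continuous_image[OF continuous_on_subset[OF assms]]) auto
  then have "bounded (g ` {0..T})" by (rule compact_imp_bounded)
  then show ?thesis unfolding bounded_iff by auto
qed

lemma lip_cball:
  fixes f :: "real \<Rightarrow> real"
  assumes "\<forall>x. \<exists>U L. open U \<and> x \<in> U \<and> L-lipschitz_on U f"
  shows "\<exists>L. L-lipschitz_on (cball 0 R) f"
proof -
  have ll: "local_lipschitz {0::real} (cball 0 R) (\<lambda>_. f)"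
  proof (rule local_lipschitzI)
    fix t x assume "t \<in> {0::real}" "x \<in> cball (0::real) R"
    from assms obtain U L where U: "open U" "x \<in> U" "L-lipschitz_on U f" by blast
    from open_contains_cball[THEN iffD1, OF U(1)] U(2) obtain e where e: "e > 0" "cball x e \<subseteq> U"
      by blast
    show "\<exists>u>0. \<exists>L. \<forall>t\<in>cball t u \<inter> {0}. L-lipschitz_on (cball x u \<inter> cball 0 R) f"
      using e by (intro exI[of _ e] conjI exI[of _ L]) (auto intro: lipschitz_on_subset[OF U(3)])
  qed
  obtain L where "\<And>t. t \<in> {0::real} \<Longrightarrow> L-lipschitz_on (cball 0 R) f"
    by (rule local_lipschitz_compact_implies_lipschitz[OF ll]) auto
  then show ?thesis by blast
qed

lemma left_lim:
  fixes g :: "real \<Rightarrow> real"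
  assumes "continuous_on {0..} g" "t > 0"
  shows "(g \<longlongrightarrow> g t) (at_left t)"
proof -
  have "isCont g t" using continuous_on_interior[OF assms(1)] assms(2) by simp
  then have "(g \<longlongrightarrow> g t) (at t)" by (simp add: isCont_def)
  then show ?thesis by (simp add: filterlim_at_split)
qed


theorem propositionB7:
  fixes \<alpha> \<beta> :: real
    and f :: "real \<Rightarrow> real"
    and \<zeta> \<xi> :: "real \<Rightarrow> real"
    and Wl Ql Wu Qu Wl' Ql' Wu' Qu' :: "int \<Rightarrow> real \<Rightarrow> real"
  assumes "\<alpha> > 0" and "\<beta> > 0"
    and "admissible_f f"
    and "continuous_on {0..} \<zeta>" and "continuous_on {0..} \<xi>"
    \<comment> \<open>all components are C^1 on [0,+\<infinity>), with derivatives Wl', Ql', Wu', Qu'\<close>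
    and "\<And>j t. t \<ge> 0 \<Longrightarrow> (Wl j has_real_derivative Wl' j t) (at t within {0..})"
    and "\<And>j t. t \<ge> 0 \<Longrightarrow> (Ql j has_real_derivative Ql' j t) (at t within {0..})"
    and "\<And>j t. t \<ge> 0 \<Longrightarrow> (Wu j has_real_derivative Wu' j t) (at t within {0..})"
    and "\<And>j t. t \<ge> 0 \<Longrightarrow> (Qu j has_real_derivative Qu' j t) (at t within {0..})"
    and "\<And>j. continuous_on {0..} (Wl' j)" and "\<And>j. continuous_on {0..} (Ql' j)"
    and "\<And>j. continuous_on {0..} (Wu' j)" and "\<And>j. continuous_on {0..} (Qu' j)"
    \<comment> \<open>supersolution\<close>
    and "\<And>j t. t > 0 \<Longrightarrow> \<zeta> t \<le> real_of_int j \<Longrightarrow> real_of_int j \<le> \<xi> t \<Longrightarrow>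
           Wu' j t \<ge> - 2 * \<alpha> * Wu j t + \<beta> * (Qu j t + Qu (j + 1) t)"
    and "\<And>j t. t > 0 \<Longrightarrow> \<zeta> t \<le> real_of_int j \<Longrightarrow> real_of_int j \<le> \<xi> t \<Longrightarrow>
           Qu' j t \<ge> f (Qu j t) + \<alpha> * (Wu j t + Wu (j - 1) t) - 2 * \<beta> * Qu j t"
    \<comment> \<open>subsolution\<close>
    and "\<And>j t. t > 0 \<Longrightarrow> \<zeta> t \<le> real_of_int j \<Longrightarrow> real_of_int j \<le> \<xi> t \<Longrightarrow>
           Wl' j t \<le> - 2 * \<alpha> * Wl j t + \<beta> * (Ql j t + Ql (j + 1) t)"
    and "\<And>j t. t > 0 \<Longrightarrow> \<zeta> t \<le> real_of_int j \<Longrightarrow> real_of_int j \<le> \<xi> t \<Longrightarrow>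
           Ql' j t \<le> f (Ql j t) + \<alpha> * (Wl j t + Wl (j - 1) t) - 2 * \<beta> * Ql j t"
    \<comment> \<open>initial ordering\<close>
    and "\<And>j. \<zeta> 0 - 1 \<le> real_of_int j \<Longrightarrow> real_of_int j \<le> \<xi> 0 + 1 \<Longrightarrow>
           Wl j 0 \<le> Wu j 0 \<and> Ql j 0 \<le> Qu j 0"
    \<comment> \<open>boundary ordering\<close>
    and "\<And>j t. t > 0 \<Longrightarrow>
           (\<zeta> t - 1 \<le> real_of_int j \<and> real_of_int j < \<zeta> t) \<or>
           (\<xi> t < real_of_int j \<and> real_of_int j \<le> \<xi> t + 1) \<Longrightarrow>
           Wl j t \<le> Wu j t \<and> Ql j t \<le> Qu j t"
  shows "\<forall>t > 0. \<forall>j. \<zeta> t \<le> real_of_int j \<and> real_of_int j \<le> \<xi> t \<longrightarrow>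
           Wl j t \<le> Wu j t \<and> Ql j t \<le> Qu j t"
  proof (intro allI impI)
  fix t1 :: real and j1 :: int
  assume t1: "t1 > 0" and j1: "\<zeta> t1 \<le> real_of_int j1 \<and> real_of_int j1 \<le> \<xi> t1"
  define E where "E t j \<longleftrightarrow> \<zeta> t - 1 \<le> real_of_int j \<and> real_of_int j \<le> \<xi> t + 1" for t and j :: int
  define w where "w j t = Wl j t - Wu j t" for j t
  define q where "q j t = Ql j t - Qu j t" for j t
  have dWl: "(Wl j has_real_derivative Wl' j t) (at t)" if "t > 0" for j t
    using assms(6)[of t j] that at_within_interior[of t "{0..}"] by simp
  have dQl: "(Ql j has_real_derivative Ql' j t) (at t)" if "t > 0" for j t
    using assms(7)[of t j] that at_within_interior[of t "{0..}"] by simp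
  have dWu: "(Wu j has_real_derivative Wu' j t) (at t)" if "t > 0" for j t
    using assms(8)[of t j] that at_within_interior[of t "{0..}"] by simp
  have dQu: "(Qu j has_real_derivative Qu' j t) (at t)" if "t > 0" for j t
    using assms(9)[of t j] that at_within_interior[of t "{0..}"] by simp
  have cWl: "continuous_on {0..} (Wl j)" for j by (rule DERIV_continuous_on[OF assms(6)]) simp
  have cQl: "continuous_on {0..} (Ql j)" for j by (rule DERIV_continuous_on[OF assms(7)]) simp
  have cWu: "continuous_on {0..} (Wu j)" for j by (rule DERIV_continuous_on[OF assms(8)]) simp
  have cQu: "continuous_on {0..} (Qu j)" for j by (rule DERIV_continuous_on[OF assms(9)]) simp
  have cw: "continuous_on {0..} (w j)" for j
    unfolding w_def by (intro continuous_intros cWl cWu)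
  have cq: "continuous_on {0..} (q j)" for j
    unfolding q_def by (intro continuous_intros cQl cQu)
  obtain B1 where B1: "\<forall>t\<in>{0..t1}. \<bar>\<zeta> t\<bar> \<le> B1" using bnd_on[OF assms(4)] by blast
  obtain B2 where B2: "\<forall>t\<in>{0..t1}. \<bar>\<xi> t\<bar> \<le> B2" using bnd_on[OF assms(5)] by blast
  define M where "M = max B1 B2"
  define N where "N = \<lceil>M\<rceil> + 2"
  define J where "J = {-N..N}"
  have finJ: "finite J" unfolding J_def by simp
  have inJ: "j \<in> J" if "t \<in> {0..t1}" "E t j" for t j
  proof -
    have a: "\<bar>\<zeta> t\<bar> \<le> M" "\<bar>\<xi> t\<bar> \<le> M" using B1 B2 that(1) unfolding M_def by force+
    have b: "M \<le> real_of_int \<lceil>M\<rceil>" by (rule le_of_int_ceiling)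
    have c: "real_of_int j \<le> M + 1" "- M - 1 \<le> real_of_int j"
      using a that(2) unfolding E_def by (auto simp: abs_le_iff)
    have "real_of_int j \<le> real_of_int \<lceil>M\<rceil> + 2" "- real_of_int \<lceil>M\<rceil> - 2 \<le> real_of_int j"
      using b c by linarith+
    then have "real_of_int j \<le> real_of_int N" "real_of_int (- N) \<le> real_of_int j"
      unfolding N_def by simp_all
    then show ?thesis unfolding J_def by (simp only: of_int_le_iff atLeastAtMost_iff)
  qed
  have "\<forall>j. \<exists>r. \<forall>t\<in>{0..t1}. \<bar>Ql j t\<bar> \<le> r \<and> \<bar>Qu j t\<bar> \<le> r"
  proof
    fix j
    obtain r1 where "\<forall>t\<in>{0..t1}. \<bar>Ql j t\<bar> \<le> r1" using bnd_on[OF cQl] by blast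
    moreover obtain r2 where "\<forall>t\<in>{0..t1}. \<bar>Qu j t\<bar> \<le> r2" using bnd_on[OF cQu] by blast
    ultimately show "\<exists>r. \<forall>t\<in>{0..t1}. \<bar>Ql j t\<bar> \<le> r \<and> \<bar>Qu j t\<bar> \<le> r"
      by (intro exI[of _ "max r1 r2"]) auto
  qed
  then obtain Rf where Rf: "\<And>j t. t \<in> {0..t1} \<Longrightarrow> \<bar>Ql j t\<bar> \<le> Rf j \<and> \<bar>Qu j t\<bar> \<le> Rf j"
    by metis
  define R where "R = (\<Sum>j\<in>J. \<bar>Rf j\<bar>)"
  have inR: "Ql j t \<in> cball 0 R \<and> Qu j t \<in> cball 0 R" if "t \<in> {0..t1}" "j \<in> J" for j t
  proof -
    have "\<bar>Rf j\<bar> \<le> R" unfolding R_def using finJ that(2) by (intro member_le_sum) auto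
    then show ?thesis using Rf[OF that(1), of j] by auto
  qed
  obtain L where L: "L-lipschitz_on (cball 0 R) f"
    using lip_cball[of f R] assms(3) unfolding admissible_f_def by blast
  have L0: "0 \<le> L" using lipschitz_on_nonneg[OF L] .
  define K where "K = L + 2*\<alpha> + 2*\<beta> + 1"
  have main: "w j t < \<epsilon> * exp (K*t) \<and> q j t < \<epsilon> * exp (K*t)"
    if eps: "\<epsilon> > 0" and tt: "t \<in> {0..t1}" and Etj: "E t j" for \<epsilon> t j
  proof (rule ccontr)
    assume nc: "\<not> ?thesis"
    define F where "F = {t\<in>{0..t1}. \<exists>j. E t j \<and> (\<epsilon> * exp (K*t) \<le> w j t \<or> \<epsilon> * exp (K*t) \<le> q j t)}"
    have tF: "t \<in> F" using nc tt Etj unfolding F_def by auto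
    have bdd: "bdd_below F" unfolding F_def by (rule bdd_belowI[of _ 0]) auto
    have clF: "closed F"
    proof -
      define ze where "ze s = \<zeta> (max 0 s)" for s
      define xe where "xe s = \<xi> (max 0 s)" for s
      define wX where "wX j s = w j (max 0 s)" for j s
      define qX where "qX j s = q j (max 0 s)" for j s
      have cmax: "continuous_on UNIV (\<lambda>s::real. max 0 s)" by (intro continuous_intros)
      have img: "(\<lambda>s::real. max 0 s) ` UNIV \<subseteq> {0..}" by auto
      have cze: "continuous_on UNIV ze" unfolding ze_def by (rule continuous_on_compose2[OF assms(4) cmax img])
      have cxe: "continuous_on UNIV xe" unfolding xe_def by (rule continuous_on_compose2[OF assms(5) cmax img])
      have cwe: "continuous_on UNIV (wX j)" for j unfolding wX_def by (rule continuous_on_compose2[OF cw cmax img])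
      have cqe: "continuous_on UNIV (qX j)" for j unfolding qX_def by (rule continuous_on_compose2[OF cq cmax img])
      have "F = {0..t1} \<inter> (\<Union>j\<in>J. {s. ze s - 1 \<le> real_of_int j} \<inter> {s. real_of_int j \<le> xe s + 1}
                 \<inter> ({s. \<epsilon> * exp (K * s) \<le> wX j s} \<union> {s. \<epsilon> * exp (K * s) \<le> qX j s}))"
        unfolding F_def ze_def xe_def wX_def qX_def using inJ unfolding E_def by auto blast+
      also have "closed \<dots>"
        by (intro closed_Int closed_atLeastAtMost closed_UN finJ ballI closed_Un closed_Collect_le
            continuous_intros cze cxe cwe cqe)
      finally show ?thesis .
    qed
    define ts where "ts = Inf F"
    have tsF: "ts \<in> F" unfolding ts_def using closed_contains_Inf[of F] tF bdd clF by blast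
    have ts_le: "ts \<le> s" if "s \<in> F" for s unfolding ts_def using cInf_lower[OF that bdd] .
    have ts01: "0 \<le> ts" "ts \<le> t1" using tsF unfolding F_def by auto
    have before: "w i s < \<epsilon> * exp (K * s) \<and> q i s < \<epsilon> * exp (K * s)" if "0 \<le> s" "s < ts" "E s i" for s i
    proof (rule ccontr)
      assume "\<not> ?thesis"
      then have "s \<in> F" using that ts01 unfolding F_def by auto
      then show False using ts_le that(2) by fastforce
    qed
    have ts0: "ts > 0"
    proof (rule ccontr)
      assume "\<not> ts > 0" then have "ts = 0" using ts01 by simp
      then obtain i where i: "E 0 i" "\<epsilon> \<le> w i 0 \<or> \<epsilon> \<le> q i 0" using tsF unfolding F_def by auto
      moreover have "w i 0 \<le> 0 \<and> q i 0 \<le> 0" using assms(18)[of i] i(1) unfolding E_def w_def q_def by auto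
      ultimately show False using eps by auto
    qed
    have ev: "eventually (\<lambda>s. 0 \<le> s \<and> s < ts \<and> E s i) (at_left ts)"
      if "\<zeta> ts \<le> real_of_int i" "real_of_int i \<le> \<xi> ts" for i
    proof -
      have "eventually (\<lambda>s. \<zeta> s < real_of_int i + 1) (at_left ts)"
        by (rule order_tendstoD(2)[OF left_lim[OF assms(4) ts0]]) (use that in linarith)
      moreover have "eventually (\<lambda>s. real_of_int i - 1 < \<xi> s) (at_left ts)"
        by (rule order_tendstoD(1)[OF left_lim[OF assms(5) ts0]]) (use that in linarith)
      moreover have "eventually (\<lambda>s. s \<in> {0<..<ts}) (at_left ts)" by (rule eventually_at_left_real[OF ts0])
      ultimately show ?thesis by eventually_elim (auto simp: E_def)
    qed
    have evlt: "eventually (\<lambda>s. w i s < \<epsilon> * exp (K * s) \<and> q i s < \<epsilon> * exp (K * s)) (at_left ts)"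
      if "\<zeta> ts \<le> real_of_int i" "real_of_int i \<le> \<xi> ts" for i
      using ev[OF that] by eventually_elim (use before in auto)
    have cexp: "((\<lambda>s. \<epsilon> * exp (K * s)) \<longlongrightarrow> \<epsilon> * exp (K*ts)) (at_left ts)" by (intro tendsto_intros)
    have epos: "0 < \<epsilon> * exp (K*ts)" using eps by simp
    have atts: "w i ts \<le> \<epsilon> * exp (K*ts) \<and> q i ts \<le> \<epsilon> * exp (K*ts)" if "E ts i" for i
    proof (cases "\<zeta> ts \<le> real_of_int i \<and> real_of_int i \<le> \<xi> ts")
      case True
      have "w i ts \<le> \<epsilon> * exp (K*ts)"
        by (rule tendsto_le[OF trivial_limit_at_left_real cexp left_lim[OF cw ts0]])
           (use evlt[of i] True in \<open>auto elim: eventually_mono\<close>)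
      moreover have "q i ts \<le> \<epsilon> * exp (K*ts)"
        by (rule tendsto_le[OF trivial_limit_at_left_real cexp left_lim[OF cq ts0]])
           (use evlt[of i] True in \<open>auto elim: eventually_mono\<close>)
      ultimately show ?thesis ..
    next
      case False
      then have "Wl i ts \<le> Wu i ts \<and> Ql i ts \<le> Qu i ts" using assms(19)[OF ts0, of i] that unfolding E_def by auto
      then show ?thesis using epos unfolding w_def q_def by auto
    qed
    obtain j where Ej: "E ts j" and bad: "\<epsilon> * exp (K*ts) \<le> w j ts \<or> \<epsilon> * exp (K*ts) \<le> q j ts"
      using tsF unfolding F_def by auto
    have Dj: "\<zeta> ts \<le> real_of_int j \<and> real_of_int j \<le> \<xi> ts"
    proof (rule ccontr)
      assume "\<not> ?thesis"
      then have "Wl j ts \<le> Wu j ts \<and> Ql j ts \<le> Qu j ts" using assms(19)[OF ts0, of j] Ej unfolding E_def by auto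
      then show False using bad epos unfolding w_def q_def by auto
    qed
    have E1: "E ts (j+1)" "E ts (j-1)" using Dj unfolding E_def by auto
    have jJ: "j \<in> J" using inJ[OF _ Ej] ts01 by auto
    have contra: False if der: "(v has_real_derivative l) (at ts)" and l: "l < 0" and v0: "0 \<le> v ts"
      and vev: "eventually (\<lambda>s. v s < 0) (at_left ts)" for v l
    proof -
      obtain d where d: "d > 0" "\<And>h. h > 0 \<Longrightarrow> h < d \<Longrightarrow> v ts < v (ts - h)"
        using DERIV_neg_dec_left[OF der l] by blast
      have "eventually (\<lambda>s. v s < 0 \<and> s \<in> {ts - d<..<ts}) (at_left ts)"
        using vev eventually_at_left_real[of "ts - d" ts] d(1) by (auto intro: eventually_conj)
      then obtain s where s: "v s < 0" "s \<in> {ts - d<..<ts}"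
        using eventually_happens'[OF trivial_limit_at_left_real] by blast
      have "v ts < v (ts - (ts - s))" by (rule d(2)) (use s in auto)
      then show False using s v0 by simp
    qed
    define e where "e = \<epsilon> * exp (K*ts)"
    have Ke: "\<epsilon> * (exp (K*ts) * K) = L*e + 2*(\<alpha>*e) + 2*(\<beta>*e) + e"
      by (simp add: e_def K_def algebra_simps)
    have ae: "0 < \<alpha>*e" "0 < \<beta>*e" "0 \<le> L*e" "0 < e" using assms(1,2) epos L0 unfolding e_def by auto
    from bad show False
    proof
      assume wb: "\<epsilon> * exp (K*ts) \<le> w j ts"
      have der: "((\<lambda>s. w j s - \<epsilon> * exp (K * s)) has_real_derivative
                   (Wl' j ts - Wu' j ts - \<epsilon> * (exp (K*ts) * K))) (at ts)"
        unfolding w_def by (auto intro!: derivative_eq_intros dWl dWu ts0)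
      have h1: "Wl' j ts \<le> - 2 * \<alpha> * Wl j ts + \<beta> * (Ql j ts + Ql (j + 1) ts)"
        using assms(16)[OF ts0] Dj by auto
      have h2: "Wu' j ts \<ge> - 2 * \<alpha> * Wu j ts + \<beta> * (Qu j ts + Qu (j + 1) ts)"
        using assms(14)[OF ts0] Dj by auto
      have eq: "- 2 * \<alpha> * Wl j ts + \<beta> * (Ql j ts + Ql (j + 1) ts) - (- 2 * \<alpha> * Wu j ts + \<beta> * (Qu j ts + Qu (j + 1) ts))
                = -2*(\<alpha>*w j ts) + \<beta>*q j ts + \<beta>*q (j+1) ts"
        by (simp add: w_def q_def algebra_simps)
      have m1: "\<alpha>*e \<le> \<alpha>*w j ts" using wb assms(1) unfolding e_def by simp
      have m2: "\<beta>*q j ts \<le> \<beta>*e" using atts[OF Ej] assms(2) unfolding e_def by simp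
      have m3: "\<beta>*q (j+1) ts \<le> \<beta>*e" using atts[OF E1(1)] assms(2) unfolding e_def by simp
      have lneg: "Wl' j ts - Wu' j ts - \<epsilon> * (exp (K*ts) * K) < 0"
        using h1 h2 eq m1 m2 m3 Ke ae by linarith
      show False
      proof (rule contra[OF der lneg])
        show "0 \<le> w j ts - \<epsilon> * exp (K * ts)" using wb by simp
        show "\<forall>\<^sub>F s in at_left ts. w j s - \<epsilon> * exp (K * s) < 0"
          using evlt[of j] Dj by (auto elim: eventually_mono)
      qed
    next
      assume qb: "\<epsilon> * exp (K*ts) \<le> q j ts"
      have qe: "q j ts = e" using qb atts[OF Ej] unfolding e_def by auto
      have der: "((\<lambda>s. q j s - \<epsilon> * exp (K * s)) has_real_derivative
                   (Ql' j ts - Qu' j ts - \<epsilon> * (exp (K*ts) * K))) (at ts)"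
        unfolding q_def by (auto intro!: derivative_eq_intros dQl dQu ts0)
      have h1: "Ql' j ts \<le> f (Ql j ts) + \<alpha> * (Wl j ts + Wl (j - 1) ts) - 2 * \<beta> * Ql j ts"
        using assms(17)[OF ts0] Dj by auto
      have h2: "Qu' j ts \<ge> f (Qu j ts) + \<alpha> * (Wu j ts + Wu (j - 1) ts) - 2 * \<beta> * Qu j ts"
        using assms(15)[OF ts0] Dj by auto
      have eq: "f (Ql j ts) + \<alpha> * (Wl j ts + Wl (j - 1) ts) - 2 * \<beta> * Ql j ts
               - (f (Qu j ts) + \<alpha> * (Wu j ts + Wu (j - 1) ts) - 2 * \<beta> * Qu j ts)
              = (f (Ql j ts) - f (Qu j ts)) + \<alpha>*w j ts + \<alpha>*w (j-1) ts - 2*(\<beta>*q j ts)"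
        by (simp add: w_def q_def algebra_simps)
      have lip: "dist (f (Ql j ts)) (f (Qu j ts)) \<le> L * dist (Ql j ts) (Qu j ts)"
        by (rule lipschitz_onD[OF L]) (use inR[OF _ jJ, of ts] ts01 in auto)
      have fl: "f (Ql j ts) - f (Qu j ts) \<le> L * e"
        using lip qe epos unfolding dist_real_def q_def e_def by (auto simp: abs_if split: if_splits)
      have "\<beta> * q j ts = \<beta> * e" using qe by simp
      have m1: "\<alpha>*w j ts \<le> \<alpha>*e" using atts[OF Ej] assms(1) unfolding e_def by simp
      have m2: "\<alpha>*w (j-1) ts \<le> \<alpha>*e" using atts[OF E1(2)] assms(1) unfolding e_def by simp
      have lneg: "Ql' j ts - Qu' j ts - \<epsilon> * (exp (K*ts) * K) < 0"
        using h1 h2 eq m1 m2 Ke ae fl qe \<open>\<beta> * q j ts = \<beta> * e\<close> by linarith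
      show False
      proof (rule contra[OF der lneg])
        show "0 \<le> q j ts - \<epsilon> * exp (K * ts)" using qb by simp
        show "\<forall>\<^sub>F s in at_left ts. q j s - \<epsilon> * exp (K * s) < 0"
          using evlt[of j] Dj by (auto elim: eventually_mono)
      qed
    qed
  qed
  have "w j1 t1 \<le> 0 \<and> q j1 t1 \<le> 0"
  proof (rule ccontr)
    assume "\<not> ?thesis"
    then have pos: "0 < max (w j1 t1) (q j1 t1)" by auto
    define \<epsilon> where "\<epsilon> = max (w j1 t1) (q j1 t1) / exp (K*t1)"
    have epos: "\<epsilon> > 0" using pos by (simp add: \<epsilon>_def)
    have "E t1 j1" using j1 unfolding E_def by auto
    then have "w j1 t1 < \<epsilon> * exp (K*t1) \<and> q j1 t1 < \<epsilon> * exp (K*t1)"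
      using main[OF epos, of t1 j1] t1 by auto
    then show False unfolding \<epsilon>_def by auto
  qed
  then show "Wl j1 t1 \<le> Wu j1 t1 \<and> Ql j1 t1 \<le> Qu j1 t1" unfolding w_def q_def by auto
qed

end
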